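(* Define $\mathbb E_x(t_1)=\int_0^\infty \frac1\alpha\log\Big(\frac{y}{x^\alpha}+1\Big)e^{-y}\,dy$ for $x>0$ (the expected first jump time $t_1=\frac1\alpha\log\frac{\varepsilon_1+x^\alpha}{x^\alpha}$ of the process started at $x$), and $$\mathbb E(t_1)=\int_0^\infty \mathbb E_x(t_1)f_*(x)\,m(dx).$$ Then $\mathbb E(t_1)<\infty$ if and only if $\mathbb E\log\theta_1>-\infty$, i.e. $\int_0^1\log z\,h(z)z\,dz>-\infty$, in which case $$\mathbb E(t_1)=\mathbb E(-\log\theta_1)=-\int_0^1\log z\,h(z)z\,dz.$$
   Context: Fix $\alpha>0$ and a Borel function $h\colon(0,1)\to[0,\infty)$ with $\int_0^1 h(r)r\,dr=1$; $m(dx)=x\,dx$ on $(0,\infty)$. Let $\varepsilon_n$ be i.i.d. exponential with mean 1 and $\theta_n$ i.i.d. on $(0,1)$ with $P(\theta_n\le r)=\int_0^r h(z)z\,dz$, all independent. $f_*$ is the density with respect to $m$ of the random variable $X_\infty=\big(\sum_{k\ge1}\varepsilon_k\prod_{j=1}^k\theta_j^\alpha\big)^{1/\alpha}$ (equivalently, the density of the unique stationary distribution of the Markov chain $X_n=\theta_n(\varepsilon_n+X_{n-1}^\alpha)^{1/\alpha}$). *)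

theory Defs
  imports "HOL-Probability.Probability"
begin

text \<open>The random variable X_infinity = (sum_{k>=1} eps_k prod_{j=1}^k theta_j^alpha)^(1/alpha),
  with sequences indexed from 1 (the index-0 entries are unused).\<close>
definition X_inf :: "real \<Rightarrow> (nat \<Rightarrow> 'a \<Rightarrow> real) \<Rightarrow> (nat \<Rightarrow> 'a \<Rightarrow> real) \<Rightarrow> 'a \<Rightarrow> real" where
  "X_inf \<alpha> \<epsilon> \<theta> \<omega> =
     (\<Sum>k. \<epsilon> (Suc k) \<omega> * (\<Prod>j\<in>{1..Suc k}. \<theta> j \<omega> powr \<alpha>)) powr (1 / \<alpha>)"

definition m_meas :: "real measure" where
  "m_meas = density lborel (\<lambda>x. ennreal (indicator {0<..} x * x))"

definition Ex_t1 :: "real \<Rightarrow> real \<Rightarrow> ennreal" where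
  "Ex_t1 \<alpha> x = (\<integral>\<^sup>+ y \<in> {0<..}. ennreal ((1 / \<alpha>) * ln (y / x powr \<alpha> + 1) * exp (- y)) \<partial>lborel)"

definition E_t1 :: "real \<Rightarrow> (real \<Rightarrow> real) \<Rightarrow> ennreal" where
  "E_t1 \<alpha> f = (\<integral>\<^sup>+ x \<in> {0<..}. Ex_t1 \<alpha> x * ennreal (f x) \<partial>m_meas)"

end

theory Submission
  imports Defs
begin

definition shf :: "nat + nat \<Rightarrow> nat + nat" where
  "shf i = (case i of Inl k \<Rightarrow> Inl (Suc k) | Inr k \<Rightarrow> Inr (Suc k))"

definition trm :: "real \<Rightarrow> (nat + nat \<Rightarrow> real) \<Rightarrow> nat \<Rightarrow> real" where
  "trm \<alpha> w k = w (Inl (Suc k)) * (\<Prod>j\<in>{1..Suc k}. w (Inr j) powr \<alpha>)"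

definition Phi :: "real \<Rightarrow> (nat + nat \<Rightarrow> real) \<Rightarrow> real" where
  "Phi \<alpha> w = (\<Sum>k. trm \<alpha> w k) powr (1 / \<alpha>)"

lemma X_inf_Phi: "X_inf \<alpha> \<epsilon> \<theta> \<omega> = Phi \<alpha> (\<lambda>i. case_sum \<epsilon> \<theta> i \<omega>)"
  by (simp add: X_inf_def Phi_def trm_def)

lemma Phi_measurable[measurable]: "Phi \<alpha> \<in> borel_measurable (PiM UNIV (\<lambda>_. borel))"
  unfolding Phi_def trm_def by measurable

lemma shf_meas_B[measurable]: "(\<lambda>w. w \<circ> shf) \<in> measurable (PiM UNIV (\<lambda>_. borel)) (PiM UNIV (\<lambda>_::nat+nat. borel::real measure))"
  unfolding comp_def by (rule measurable_PiM_single') (auto simp: space_PiM)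

lemma Ex_t1_measurable[measurable]: "Ex_t1 \<alpha> \<in> borel_measurable borel"
  unfolding Ex_t1_def by measurable

lemma Phi_not_summable: "\<not> summable (trm \<alpha> w) \<Longrightarrow> Phi \<alpha> w = (THE s::real. False) powr (1 / \<alpha>)"
proof -
  assume "\<not> summable (trm \<alpha> w)"
  then have "(\<lambda>s. trm \<alpha> w sums s) = (\<lambda>s. False)" by (auto simp: summable_def)
  then show ?thesis by (simp add: Phi_def suminf_def)
qed

lemma Phi_upd: "Phi \<alpha> ((w(Inl (Suc 0) := x)) \<circ> shf) = Phi \<alpha> (w \<circ> shf)"
  unfolding Phi_def trm_def by (simp add: shf_def)

lemma prod_split1: "(\<Prod>j\<in>{1..Suc n}. f j) = f 1 * (\<Prod>j\<in>{1..n}. f (Suc j)) " for f :: "nat \<Rightarrow> real"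
  by (subst prod.atLeast_Suc_atMost, simp, subst prod.shift_bounds_cl_Suc_ivl, simp)

lemma trm_Suc: "trm \<alpha> w (Suc k) = w (Inr 1) powr \<alpha> * trm \<alpha> (w \<circ> shf) k"
  unfolding trm_def by (subst prod_split1) (simp add: shf_def)

lemma Ex_t1_alt: "Ex_t1 \<alpha> x = (\<integral>\<^sup>+y. ennreal ((1 / \<alpha>) * ln (y / x powr \<alpha> + 1)) \<partial>density lborel (\<lambda>y. ennreal (exponential_density 1 y)))"
proof -
  have "Ex_t1 \<alpha> x = (\<integral>\<^sup>+y. ennreal (exponential_density 1 y) * ennreal ((1 / \<alpha>) * ln (y / x powr \<alpha> + 1)) \<partial>lborel)"
    unfolding Ex_t1_def
  proof (intro nn_integral_cong)
    fix y :: real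
    show "ennreal ((1 / \<alpha>) * ln (y / x powr \<alpha> + 1) * exp (- y)) * indicator {0<..} y =
       ennreal (exponential_density 1 y) * ennreal ((1 / \<alpha>) * ln (y / x powr \<alpha> + 1))"
      by (cases "y < 0"; cases "y = 0") (auto simp: exponential_density_def ennreal_mult'[symmetric] mult.commute)
  qed
  then show ?thesis by (subst nn_integral_density) auto
qed

lemma pointwise_identity:
  assumes a: "\<alpha> > 0" and pos: "\<And>k. w (Inl k) > 0" "\<And>k. w (Inr k) > 0"
    and sm: "summable (trm \<alpha> (w \<circ> shf))" and P: "Phi \<alpha> (w \<circ> shf) > 0"
  shows "(1 / \<alpha>) * ln (w (Inl 1) / (Phi \<alpha> (w \<circ> shf)) powr \<alpha> + 1) - (- ln (w (Inr 1)))
        = ln (Phi \<alpha> w) - ln (Phi \<alpha> (w \<circ> shf))"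
proof -
  define S' where "S' = (\<Sum>k. trm \<alpha> (w \<circ> shf) k)"
  define e where "e = w (Inl 1)"
  define t where "t = w (Inr 1)"
  have e: "e > 0" and t: "t > 0" using pos by (auto simp: e_def t_def)
  have tnn: "trm \<alpha> (w \<circ> shf) k \<ge> 0" for k
    unfolding trm_def using pos by (auto intro!: mult_nonneg_nonneg prod_nonneg simp: less_imp_le shf_def)
  have "S' \<ge> 0" unfolding S'_def using tnn sm by (simp add: suminf_nonneg)
  moreover have "S' \<noteq> 0" using P by (auto simp: Phi_def S'_def)
  ultimately have S': "S' > 0" by simp
  have PS: "Phi \<alpha> (w \<circ> shf) = S' powr (1 / \<alpha>)" by (simp add: Phi_def S'_def)
  have "(\<lambda>k. trm \<alpha> w (Suc k)) sums (t powr \<alpha> * S')"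
    unfolding trm_Suc t_def S'_def by (intro sums_mult summable_sums sm)
  then have "trm \<alpha> w sums (t powr \<alpha> * S' + trm \<alpha> w 0)" by (rule sums_Suc)
  moreover have "trm \<alpha> w 0 = e * t powr \<alpha>" by (simp add: trm_def e_def t_def)
  ultimately have "(\<Sum>k. trm \<alpha> w k) = t powr \<alpha> * (e + S')"
    by (simp add: sums_iff algebra_simps)
  then have PW: "Phi \<alpha> w = (t powr \<alpha> * (e + S')) powr (1 / \<alpha>)" by (simp add: Phi_def)
  have l1: "ln (Phi \<alpha> w) = ln t + (1 / \<alpha>) * ln (e + S')"
  proof -
    have "ln (t powr \<alpha> * (e + S')) = \<alpha> * ln t + ln (e + S')"
      using t e S' by (subst ln_mult) auto
    then show ?thesis unfolding PW using a by (simp add: field_simps)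
  qed
  have l2: "ln (Phi \<alpha> (w \<circ> shf)) = (1 / \<alpha>) * ln S'"
    unfolding PS using S' by simp
  have l3: "(Phi \<alpha> (w \<circ> shf)) powr \<alpha> = S'"
    unfolding PS using S' a by (simp add: powr_powr)
  have l4: "ln (e / S' + 1) = ln (e + S') - ln S'"
  proof -
    have "e / S' + 1 = (e + S') / S'" using S' by (simp add: field_simps)
    then show ?thesis using e S' by (simp add: ln_div)
  qed
  show ?thesis unfolding l1 l2 l3 e_def[symmetric] t_def[symmetric] l4 by (simp add: algebra_simps)
qed

lemma ident_distr_ennreal_diff:
  fixes U V :: "'a \<Rightarrow> real"
  assumes Q: "prob_space Q" and um[measurable]: "U \<in> borel_measurable Q" and vm[measurable]: "V \<in> borel_measurable Q"
    and eq: "distr Q borel U = distr Q borel V"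
  shows "(\<integral>\<^sup>+\<omega>. ennreal (V \<omega> - U \<omega>) \<partial>Q) = (\<integral>\<^sup>+\<omega>. ennreal (U \<omega> - V \<omega>) \<partial>Q)"
proof -
  interpret Q: prob_space Q by fact
  interpret P: pair_sigma_finite Q lborel ..
  have ind: "ennreal (b - a) = (\<integral>\<^sup>+t. indicator {t. a < t \<and> t \<le> b} t \<partial>lborel)" for a b :: real
  proof (cases "a \<le> b")
    case True
    have "{t. a < t \<and> t \<le> b} = {a<..b}" by auto
    then show ?thesis using True by simp
  next
    case False
    then have "{t. a < t \<and> t \<le> b} = {}" by auto
    then show ?thesis using False by (simp add: ennreal_neg)
  qed
  have indQ: "(\<integral>\<^sup>+\<omega>. indicator {t. A \<omega> < t \<and> t \<le> B \<omega>} t \<partial>Q) = emeasure Q {\<omega>\<in>space Q. A \<omega> < t \<and> t \<le> B \<omega>}"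
    if [measurable]: "A \<in> borel_measurable Q" "B \<in> borel_measurable Q" for A B :: "'a \<Rightarrow> real" and t
  proof -
    have "(\<lambda>\<omega>. indicator {t. A \<omega> < t \<and> t \<le> B \<omega>} t) = (indicator {\<omega>. A \<omega> < t \<and> t \<le> B \<omega>} :: _ \<Rightarrow> ennreal)"
      by (auto simp: indicator_def fun_eq_iff)
    moreover have "{\<omega>. A \<omega> < t \<and> t \<le> B \<omega>} \<inter> space Q = {\<omega>\<in>space Q. A \<omega> < t \<and> t \<le> B \<omega>}" by auto
    moreover have "{\<omega>\<in>space Q. A \<omega> < t \<and> t \<le> B \<omega>} \<in> sets Q"
    proof -
      have "{\<omega>\<in>space Q. A \<omega> < t \<and> t \<le> B \<omega>} = {w \<in> space Q. A w < t} \<inter> {w \<in> space Q. t \<le> B w}" by auto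
      then show ?thesis
      using borel_measurable_le[OF borel_measurable_const that(2), of t] borel_measurable_less[OF that(1) borel_measurable_const, of t]
      by auto
    qed
    ultimately show ?thesis using nn_integral_indicator'[of "{\<omega>. A \<omega> < t \<and> t \<le> B \<omega>}" Q] by simp
  qed
  have key: "emeasure Q {\<omega>\<in>space Q. U \<omega> < t \<and> t \<le> V \<omega>} = emeasure Q {\<omega>\<in>space Q. V \<omega> < t \<and> t \<le> U \<omega>}" for t
  proof -
    have mV: "Q.prob {\<omega>\<in>space Q. t \<le> V \<omega>} = Q.prob {\<omega>\<in>space Q. t \<le> U \<omega>}"
    proof -
      have "measure (distr Q borel V) {t..} = measure (distr Q borel U) {t..}" using eq by simp
      then show ?thesis by (simp add: measure_distr vimage_def Int_def conj_commute)
    qed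
    have s1: "{\<omega>\<in>space Q. t \<le> V \<omega>} = {\<omega>\<in>space Q. U \<omega> < t \<and> t \<le> V \<omega>} \<union> {\<omega>\<in>space Q. t \<le> U \<omega> \<and> t \<le> V \<omega>}" by auto
    have s2: "{\<omega>\<in>space Q. t \<le> U \<omega>} = {\<omega>\<in>space Q. V \<omega> < t \<and> t \<le> U \<omega>} \<union> {\<omega>\<in>space Q. t \<le> U \<omega> \<and> t \<le> V \<omega>}" by auto
    have "Q.prob {\<omega>\<in>space Q. t \<le> V \<omega>} = Q.prob {\<omega>\<in>space Q. U \<omega> < t \<and> t \<le> V \<omega>} + Q.prob {\<omega>\<in>space Q. t \<le> U \<omega> \<and> t \<le> V \<omega>}"
      unfolding s1 by (rule Q.finite_measure_Union) auto
    moreover have "Q.prob {\<omega>\<in>space Q. t \<le> U \<omega>} = Q.prob {\<omega>\<in>space Q. V \<omega> < t \<and> t \<le> U \<omega>} + Q.prob {\<omega>\<in>space Q. t \<le> U \<omega> \<and> t \<le> V \<omega>}"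
      unfolding s2 by (rule Q.finite_measure_Union) auto
    ultimately have "Q.prob {\<omega>\<in>space Q. U \<omega> < t \<and> t \<le> V \<omega>} = Q.prob {\<omega>\<in>space Q. V \<omega> < t \<and> t \<le> U \<omega>}"
      using mV by linarith
    then show ?thesis by (simp add: Q.emeasure_eq_measure)
  qed
  have "(\<integral>\<^sup>+\<omega>. ennreal (V \<omega> - U \<omega>) \<partial>Q) = (\<integral>\<^sup>+\<omega>. (\<integral>\<^sup>+t. indicator {t. U \<omega> < t \<and> t \<le> V \<omega>} t \<partial>lborel) \<partial>Q)"
    by (simp add: ind)
  also have "\<dots> = (\<integral>\<^sup>+t. (\<integral>\<^sup>+\<omega>. indicator {t. U \<omega> < t \<and> t \<le> V \<omega>} t \<partial>Q) \<partial>lborel)"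
    by (rule P.Fubini'[symmetric]) measurable
  also have "\<dots> = (\<integral>\<^sup>+t. emeasure Q {\<omega>\<in>space Q. U \<omega> < t \<and> t \<le> V \<omega>} \<partial>lborel)"
    by (intro nn_integral_cong) (rule indQ[OF um vm])
  also have "\<dots> = (\<integral>\<^sup>+t. emeasure Q {\<omega>\<in>space Q. V \<omega> < t \<and> t \<le> U \<omega>} \<partial>lborel)"
    by (simp add: key)
  also have "\<dots> = (\<integral>\<^sup>+t. (\<integral>\<^sup>+\<omega>. indicator {t. V \<omega> < t \<and> t \<le> U \<omega>} t \<partial>Q) \<partial>lborel)"
    by (intro nn_integral_cong) (rule indQ[OF vm um, symmetric])
  also have "\<dots> = (\<integral>\<^sup>+\<omega>. (\<integral>\<^sup>+t. indicator {t. V \<omega> < t \<and> t \<le> U \<omega>} t \<partial>lborel) \<partial>Q)"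
    by (rule P.Fubini') measurable
  also have "\<dots> = (\<integral>\<^sup>+\<omega>. ennreal (U \<omega> - V \<omega>) \<partial>Q)"
    by (simp add: ind)
  finally show ?thesis .
qed


lemma ennreal_ab:
  fixes U V a b :: "'a \<Rightarrow> real"
  assumes Q: "prob_space Q" and [measurable]: "U \<in> borel_measurable Q" "V \<in> borel_measurable Q"
    and eq: "distr Q borel U = distr Q borel V"
    and [measurable]: "a \<in> borel_measurable Q" "b \<in> borel_measurable Q"
    and ae: "AE \<omega> in Q. a \<omega> \<ge> 0 \<and> b \<omega> \<ge> 0 \<and> a \<omega> - b \<omega> = V \<omega> - U \<omega>"
  shows "(\<integral>\<^sup>+\<omega>. ennreal (a \<omega>) \<partial>Q) = (\<integral>\<^sup>+\<omega>. ennreal (b \<omega>) \<partial>Q)"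
proof -
  have split: "ennreal x = ennreal (min x y) + ennreal (x - y)" if "x \<ge> 0" "y \<ge> 0" for x y :: real
  proof (cases "y \<le> x")
    case True
    then show ?thesis using that by (simp add: ennreal_plus[symmetric] del: ennreal_plus)
  next
    case False
    then show ?thesis using that by (simp add: ennreal_neg)
  qed
  have "(\<integral>\<^sup>+\<omega>. ennreal (a \<omega>) \<partial>Q) = (\<integral>\<^sup>+\<omega>. ennreal (min (a \<omega>) (b \<omega>)) + ennreal (a \<omega> - b \<omega>) \<partial>Q)"
    using ae by (intro nn_integral_cong_AE) (auto intro: split)
  also have "\<dots> = (\<integral>\<^sup>+\<omega>. ennreal (min (a \<omega>) (b \<omega>)) \<partial>Q) + (\<integral>\<^sup>+\<omega>. ennreal (a \<omega> - b \<omega>) \<partial>Q)"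
    by (rule nn_integral_add) auto
  also have "(\<integral>\<^sup>+\<omega>. ennreal (a \<omega> - b \<omega>) \<partial>Q) = (\<integral>\<^sup>+\<omega>. ennreal (V \<omega> - U \<omega>) \<partial>Q)"
    using ae by (intro nn_integral_cong_AE) auto
  also have "\<dots> = (\<integral>\<^sup>+\<omega>. ennreal (U \<omega> - V \<omega>) \<partial>Q)"
    by (rule ident_distr_ennreal_diff[OF Q _ _ eq]) auto
  also have "\<dots> = (\<integral>\<^sup>+\<omega>. ennreal (b \<omega> - a \<omega>) \<partial>Q)"
    by (rule nn_integral_cong_AE, rule AE_mp[OF ae], rule AE_I2) (auto intro!: arg_cong[where f=ennreal])
  also have "(\<integral>\<^sup>+\<omega>. ennreal (min (a \<omega>) (b \<omega>)) \<partial>Q) + (\<integral>\<^sup>+\<omega>. ennreal (b \<omega> - a \<omega>) \<partial>Q)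
      = (\<integral>\<^sup>+\<omega>. ennreal (min (a \<omega>) (b \<omega>)) + ennreal (b \<omega> - a \<omega>) \<partial>Q)"
    by (rule nn_integral_add[symmetric]) auto
  also have "\<dots> = (\<integral>\<^sup>+\<omega>. ennreal (b \<omega>) \<partial>Q)"
    by (rule nn_integral_cong_AE, rule AE_mp[OF ae], rule AE_I2) (metis min.commute split)
  finally show ?thesis .
qed

theorem lemma3p5:
  fixes M :: "'a measure"
    and \<alpha> :: real
    and h :: "real \<Rightarrow> real"
    and \<epsilon> \<theta> :: "nat \<Rightarrow> 'a \<Rightarrow> real"
    and f :: "real \<Rightarrow> real"
  assumes "prob_space M"
    and "\<alpha> > 0"
    and "h \<in> borel_measurable (restrict_space lborel {0<..<1})"
    and "\<And>r. r \<in> {0<..<1} \<Longrightarrow> h r \<ge> 0"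
    and "(\<integral>\<^sup>+ r \<in> {0<..<1}. ennreal (h r * r) \<partial>lborel) = 1"
    and "prob_space.indep_vars M (\<lambda>_. borel) (case_sum \<epsilon> \<theta>) UNIV"
    and "\<And>n. distributed M lborel (\<epsilon> n) (\<lambda>y. ennreal (exponential_density 1 y))"
    and "\<And>n. distributed M lborel (\<theta> n) (\<lambda>z. ennreal (indicator {0<..<1} z * h z * z))"
    and "distributed M m_meas (X_inf \<alpha> \<epsilon> \<theta>) (\<lambda>x. ennreal (f x))"
    and "\<And>x. x > 0 \<Longrightarrow> f x \<ge> 0"
  shows "(E_t1 \<alpha> f < \<infinity> \<longleftrightarrow>
            (\<integral>\<^sup>+ z \<in> {0<..<1}. ennreal (- ln z * h z * z) \<partial>lborel) < \<infinity>)
       \<and> (E_t1 \<alpha> f < \<infinity> \<longrightarrow>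
            E_t1 \<alpha> f = (\<integral>\<^sup>+ z \<in> {0<..<1}. ennreal (- ln z * h z * z) \<partial>lborel))"
proof -
  note hpos = assms(4)
  note ind = assms(6)
  note de = assms(7)[unfolded distributed_def]
  note dt = assms(8)[unfolded distributed_def]
  note dX = assms(9)[unfolded distributed_def]
  have a: "\<alpha> > 0" by fact
  interpret prob_space M by fact
  define Ed where "Ed = density lborel (\<lambda>y. ennreal (exponential_density 1 y))"
  define Td where "Td = density lborel (\<lambda>z. ennreal (indicator {0<..<1} z * h z * z))"
  define K where "K = (\<lambda>i::nat+nat. case i of Inl _ \<Rightarrow> Ed | Inr _ \<Rightarrow> Td)"
  define Q where "Q = PiM UNIV K"
  define vec where "vec = (\<lambda>\<omega> i. case_sum \<epsilon> \<theta> i \<omega>)"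
  define g where "g = Ex_t1 \<alpha>"
  define c1 where "c1 = (THE s::real. False) powr (1 / \<alpha>)"
  define B where "B = PiM UNIV (\<lambda>_::nat+nat. borel :: real measure)"
  have distr_lb: "distr M borel Y = distr M lborel Y" for Y :: "'a \<Rightarrow> real"
    by (simp add: distr_def)
  have Ed_eq: "distr M borel (\<epsilon> n) = Ed" for n using de by (simp add: Ed_def distr_lb)
  have Td_eq: "distr M borel (\<theta> n) = Td" for n using dt by (simp add: Td_def distr_lb)
  have rv: "random_variable borel (case_sum \<epsilon> \<theta> i)" for i
  proof (cases i)
    case (Inl n) then show ?thesis using de[of n] by simp
  next
    case (Inr n) then show ?thesis using dt[of n] by simp
  qed
  have Ed_prob: "prob_space Ed" using Ed_eq[of 0] prob_space_distr[OF rv[of "Inl 0"]] by simp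
  have Td_prob: "prob_space Td" using Td_eq[of 0] prob_space_distr[OF rv[of "Inr 0"]] by simp
  have Kprob: "prob_space (K i)" for i using Ed_prob Td_prob by (cases i) (auto simp: K_def)
  have distrK: "distr M borel (case_sum \<epsilon> \<theta> i) = K i" for i
    by (cases i) (auto simp: K_def Ed_eq Td_eq)
  have setsK: "sets (K i) = sets borel" for i by (cases i) (auto simp: K_def Ed_def Td_def)
  have setsQ: "sets Q = sets B" unfolding Q_def B_def by (rule sets_PiM_cong) (auto simp: setsK)
  have measQ: "G \<in> borel_measurable Q" if "G \<in> borel_measurable B" for G
    using that by (simp add: measurable_cong_sets[OF setsQ refl])
  interpret Q: prob_space Q unfolding Q_def by (intro prob_space_PiM Kprob)
  have vec_meas: "vec \<in> measurable M B"
    unfolding B_def vec_def by (rule measurable_PiM_single') (auto simp: rv[simplified] space_PiM)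
  have law: "distr M B vec = Q"
  proof -
    have "distr M B (\<lambda>x. \<lambda>i\<in>UNIV. case_sum \<epsilon> \<theta> i x) = PiM UNIV (\<lambda>i. distr M borel (case_sum \<epsilon> \<theta> i))"
      unfolding B_def using indep_vars_iff_distr_eq_PiM[where I=UNIV and M'="\<lambda>_. borel" and X="case_sum \<epsilon> \<theta>"] rv ind by simp
    then show ?thesis by (simp add: vec_def Q_def distrK restrict_UNIV)
  qed
  have intQ: "(\<integral>\<^sup>+\<omega>. G (vec \<omega>) \<partial>M) = (\<integral>\<^sup>+w. G w \<partial>Q)" if "G \<in> borel_measurable B" for G
  proof -
    have "(\<integral>\<^sup>+w. G w \<partial>Q) = (\<integral>\<^sup>+w. G w \<partial>distr M B vec)" by (simp add: law)
    also have "\<dots> = (\<integral>\<^sup>+\<omega>. G (vec \<omega>) \<partial>M)" by (rule nn_integral_distr[OF vec_meas]) (simp add: that)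
    finally show ?thesis by simp
  qed
  have Kshf: "K (shf i) = K i" for i by (cases i) (simp_all add: K_def shf_def)
  have inj_shf: "inj shf" by (auto simp: inj_def shf_def split: sum.splits)
  have shf_meas: "(\<lambda>w. w \<circ> shf) \<in> measurable Q Q"
  proof -
    have "(\<lambda>w. w (shf i)) \<in> measurable Q (K i)" for i
      using measurable_component_singleton[of "shf i" UNIV K] by (simp add: Q_def Kshf)
    moreover have "w \<circ> shf \<in> (\<Pi>\<^sub>E i\<in>UNIV. space (K i))" if "w \<in> space (PiM UNIV K)" for w
    proof -
      have wj: "w j \<in> space (K j)" for j using that by (auto simp: space_PiM PiE_iff)
      have "w (shf i) \<in> space (K i)" for i using wj[of "shf i"] by (simp add: Kshf)
      then show ?thesis by (auto simp: PiE_iff comp_def)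
    qed
    ultimately show ?thesis
      unfolding Q_def by (intro measurable_PiM_single') (auto simp: comp_def)
  qed
  have shift: "distr Q Q (\<lambda>w. w \<circ> shf) = Q"
    using distr_PiM_reindex[of UNIV K shf UNIV] Kprob inj_shf by (simp add: Q_def Kshf comp_def restrict_UNIV)
  have intshift: "(\<integral>\<^sup>+w. G (w \<circ> shf) \<partial>Q) = (\<integral>\<^sup>+w. G w \<partial>Q)" if "G \<in> borel_measurable Q" for G
  proof -
    have "(\<integral>\<^sup>+w. G w \<partial>Q) = (\<integral>\<^sup>+w. G w \<partial>distr Q Q (\<lambda>w. w \<circ> shf))" by (simp add: shift)
    also have "\<dots> = (\<integral>\<^sup>+w. G (w \<circ> shf) \<partial>Q)" by (rule nn_integral_distr[OF shf_meas]) (simp add: that)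
    finally show ?thesis by simp
  qed
  have AEshift: "AE w in Q. P (w \<circ> shf)" if "AE w in Q. P w" for P
  proof -
    have "AE w in distr Q Q (\<lambda>w. w \<circ> shf). P w" by (subst shift) (rule that)
    then show ?thesis by (rule AE_distrD[OF shf_meas])
  qed
  define I where "I = UNIV - {Inl (Suc 0) :: nat + nat}"
  have EPI: "pair_sigma_finite Ed (PiM I K)"
    by (intro pair_sigma_finite.intro prob_space_imp_sigma_finite Ed_prob prob_space_PiM Kprob)
  have KInl: "K (Inl n) = Ed" for n by (simp add: K_def)
  have KInr: "K (Inr n) = Td" for n by (simp add: K_def)
  have upd_meas: "(\<lambda>(x, X). X(Inl (Suc 0) := x)) \<in> measurable (Ed \<Otimes>\<^sub>M PiM I K) Q"
  proof -
    have "(\<lambda>p. (snd p)(Inl (Suc 0) := fst p)) \<in> measurable (Ed \<Otimes>\<^sub>M PiM I K) (PiM UNIV K)"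
      by (rule measurable_fun_upd[where J=I]) (auto simp: I_def KInl)
    then show ?thesis by (simp add: Q_def split_beta')
  qed
  have dp: "distr (Ed \<Otimes>\<^sub>M PiM I K) Q (\<lambda>(x, X). X(Inl (Suc 0) := x)) = Q"
    using distr_pair_PiM_eq_PiM[of I K "Inl (Suc 0)"] Kprob Ed_prob by (simp add: Q_def KInl I_def insert_absorb)
  have split1: "(\<integral>\<^sup>+w. G w \<partial>Q) = (\<integral>\<^sup>+X. (\<integral>\<^sup>+x. G (X(Inl (Suc 0) := x)) \<partial>Ed) \<partial>PiM I K)"
    if "G \<in> borel_measurable Q" for G
  proof -
    have "(\<integral>\<^sup>+w. G w \<partial>Q) = (\<integral>\<^sup>+w. G w \<partial>distr (Ed \<Otimes>\<^sub>M PiM I K) Q (\<lambda>(x, X). X(Inl (Suc 0) := x)))"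
      by (simp add: dp)
    also have "\<dots> = (\<integral>\<^sup>+p. G (case p of (x, X) \<Rightarrow> X(Inl (Suc 0) := x)) \<partial>(Ed \<Otimes>\<^sub>M PiM I K))"
      by (rule nn_integral_distr[OF upd_meas]) (simp add: that)
    also have "\<dots> = (\<integral>\<^sup>+X. (\<integral>\<^sup>+x. G (X(Inl (Suc 0) := x)) \<partial>Ed) \<partial>PiM I K)"
      by (subst pair_sigma_finite.nn_integral_snd[OF EPI, symmetric])
         (use measurable_comp[OF upd_meas that] in \<open>simp_all add: comp_def\<close>)
    finally show ?thesis .
  qed
  define Aval where "Aval = (\<lambda>w. (1 / \<alpha>) * ln (w (Inl 1) / (Phi \<alpha> (w \<circ> shf)) powr \<alpha> + 1))"
  define Bval where "Bval = (\<lambda>w::nat+nat\<Rightarrow>real. - ln (w (Inr 1)))"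
  have S1: "E_t1 \<alpha> f = (\<integral>\<^sup>+w. g (Phi \<alpha> w) \<partial>Q)"
  proof -
    have Xm: "X_inf \<alpha> \<epsilon> \<theta> \<in> measurable M m_meas" using dX by simp
    have fm: "(\<lambda>x. ennreal (f x)) \<in> borel_measurable m_meas" using dX by simp
    have setsm: "sets m_meas = sets borel" by (simp add: m_meas_def)
    have gm: "g \<in> borel_measurable m_meas" by (simp add: measurable_cong_sets[OF setsm refl] g_def)
    have AEm: "AE x in m_meas. x > 0" unfolding m_meas_def
      by (subst AE_density) (auto simp: indicator_def split: if_splits)
    have "E_t1 \<alpha> f = (\<integral>\<^sup>+x. ennreal (f x) * g x \<partial>m_meas)"
      unfolding E_t1_def g_def using AEm
      by (auto intro!: nn_integral_cong_AE elim!: eventually_mono simp: mult.commute)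
    also have "\<dots> = (\<integral>\<^sup>+x. g x \<partial>density m_meas (\<lambda>x. ennreal (f x)))"
      by (rule nn_integral_density[symmetric, OF fm gm])
    also have "\<dots> = (\<integral>\<^sup>+x. g x \<partial>distr M m_meas (X_inf \<alpha> \<epsilon> \<theta>))" using dX by simp
    also have "\<dots> = (\<integral>\<^sup>+\<omega>. g (X_inf \<alpha> \<epsilon> \<theta> \<omega>) \<partial>M)" by (rule nn_integral_distr[OF Xm]) (simp add: gm)
    also have "\<dots> = (\<integral>\<^sup>+\<omega>. g (Phi \<alpha> (vec \<omega>)) \<partial>M)" by (simp add: X_inf_Phi vec_def)
    also have "\<dots> = (\<integral>\<^sup>+w. g (Phi \<alpha> w) \<partial>Q)" by (rule intQ) (unfold B_def g_def, measurable)
    finally show ?thesis .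
  qed
  have S2: "(\<integral>\<^sup>+w. g (Phi \<alpha> (w \<circ> shf)) \<partial>Q) = (\<integral>\<^sup>+w. g (Phi \<alpha> w) \<partial>Q)"
    by (rule intshift) (auto intro!: measQ simp: B_def g_def)
  have Aval_meas: "Aval \<in> borel_measurable Q" by (rule measQ) (unfold Aval_def B_def, measurable)
  have Bval_meas: "Bval \<in> borel_measurable Q" by (rule measQ) (unfold Bval_def B_def, measurable)
  have gPs_meas: "(\<lambda>w. g (Phi \<alpha> (w \<circ> shf))) \<in> borel_measurable Q" by (rule measQ) (unfold B_def g_def, measurable)
  have S3: "(\<integral>\<^sup>+w. ennreal (Aval w) \<partial>Q) = (\<integral>\<^sup>+w. g (Phi \<alpha> (w \<circ> shf)) \<partial>Q)"
  proof -
    have "(\<integral>\<^sup>+w. ennreal (Aval w) \<partial>Q) = (\<integral>\<^sup>+X. (\<integral>\<^sup>+x. ennreal (Aval (X(Inl (Suc 0) := x))) \<partial>Ed) \<partial>PiM I K)"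
      by (rule split1) (use Aval_meas in simp)
    also have "\<dots> = (\<integral>\<^sup>+X. g (Phi \<alpha> (X \<circ> shf)) \<partial>PiM I K)"
      by (intro nn_integral_cong) (simp add: Aval_def Phi_upd g_def Ex_t1_alt Ed_def)
    also have "\<dots> = (\<integral>\<^sup>+X. (\<integral>\<^sup>+x. g (Phi \<alpha> ((X(Inl (Suc 0) := x)) \<circ> shf)) \<partial>Ed) \<partial>PiM I K)"
      by (intro nn_integral_cong) (simp add: Phi_upd prob_space.emeasure_space_1[OF Ed_prob])
    also have "\<dots> = (\<integral>\<^sup>+w. g (Phi \<alpha> (w \<circ> shf)) \<partial>Q)" by (rule split1[symmetric]) (rule gPs_meas)
    finally show ?thesis .
  qed
  have S4: "(\<integral>\<^sup>+w. ennreal (Bval w) \<partial>Q) = (\<integral>\<^sup>+ z \<in> {0<..<1}. ennreal (- ln z * h z * z) \<partial>lborel)"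
  proof -
    have cm: "(\<lambda>w. w (Inr (Suc 0))) \<in> measurable Q Td"
      using measurable_component_singleton[of "Inr (Suc 0)" UNIV K] by (simp add: Q_def KInr)
    have dc: "distr Q Td (\<lambda>w. w (Inr (Suc 0))) = Td"
      using distr_PiM_component[of UNIV K "Inr (Suc 0)"] Kprob by (simp add: Q_def KInr)
    have "(\<integral>\<^sup>+w. ennreal (Bval w) \<partial>Q) = (\<integral>\<^sup>+z. ennreal (- ln z) \<partial>distr Q Td (\<lambda>w. w (Inr (Suc 0))))"
      by (subst nn_integral_distr[OF cm]) (auto simp: Bval_def Td_def)
    also have "\<dots> = (\<integral>\<^sup>+z. ennreal (- ln z) \<partial>Td)" by (simp add: dc)
    also have "\<dots> = (\<integral>\<^sup>+z. ennreal (indicator {0<..<1} z * h z * z) * ennreal (- ln z) \<partial>lborel)"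
      unfolding Td_def by (rule nn_integral_density) (use dt[of 0] in auto)
    also have "\<dots> = (\<integral>\<^sup>+ z \<in> {0<..<1}. ennreal (- ln z * h z * z) \<partial>lborel)"
    proof (intro nn_integral_cong)
      fix z :: real
      show "ennreal (indicator {0<..<1} z * h z * z) * ennreal (- ln z) = ennreal (- ln z * h z * z) * indicator {0<..<1} z"
      proof (cases "z \<in> {0<..<1}")
        case True
        then have "0 \<le> h z * z" using hpos[of z] by auto
        then have "ennreal (h z * z) * ennreal (- ln z) = ennreal (- ln z * h z * z)"
          by (subst ennreal_mult'[symmetric]) (auto simp: ac_simps)
        then show ?thesis using True by simp
      qed simp
    qed
    finally show ?thesis .
  qed
  have S5: "(\<integral>\<^sup>+w. ennreal (Aval w) \<partial>Q) = (\<integral>\<^sup>+w. ennreal (Bval w) \<partial>Q)"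
  proof -
    have Ed_pos: "AE x in Ed. x > 0"
      unfolding Ed_def using AE_lborel_singleton[of "0::real"] de[of 0]
      by (subst AE_density) (auto simp: exponential_density_def elim!: eventually_mono)
    have Td_pos: "AE x in Td. 0 < x \<and> x < 1"
      unfolding Td_def by (subst AE_density) (use dt[of 0] in \<open>auto simp: indicator_def split: if_splits\<close>)
    have AEpos: "AE w in Q. \<forall>k. w (Inl k) > 0 \<and> w (Inr k) > 0 \<and> w (Inr k) < 1"
    proof -
      have c1: "AE w in Q. w (Inl k) > 0" for k
      proof -
        have "AE x in K (Inl k). x > 0" unfolding KInl by (rule Ed_pos)
        then show ?thesis unfolding Q_def by (intro AE_PiM_component Kprob) auto
      qed
      have c2: "AE w in Q. w (Inr k) > 0 \<and> w (Inr k) < 1" for k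
      proof -
        have "AE x in K (Inr k). 0 < x \<and> x < 1" unfolding KInr by (rule Td_pos)
        then show ?thesis unfolding Q_def by (intro AE_PiM_component Kprob) auto
      qed
      show ?thesis unfolding AE_all_countable using eventually_conj[OF c1 c2] by simp
    qed
    have Xm: "X_inf \<alpha> \<epsilon> \<theta> \<in> measurable M m_meas" using dX by simp
    have AEPhi: "AE w in Q. Phi \<alpha> w > 0 \<and> Phi \<alpha> w \<noteq> c1"
    proof -
      have AEm2: "AE x in m_meas. x > 0 \<and> x \<noteq> c1"
        unfolding m_meas_def using AE_lborel_singleton[of c1]
        by (subst AE_density) (auto simp: indicator_def elim!: eventually_mono split: if_splits)
      then have "AE x in density m_meas (\<lambda>x. ennreal (f x)). x > 0 \<and> x \<noteq> c1"
      proof -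
        have "AE x in m_meas. 0 < ennreal (f x) \<longrightarrow> x > 0 \<and> x \<noteq> c1" using AEm2 by (rule eventually_mono) simp
        then show ?thesis by (subst AE_density) (use dX in auto)
      qed
      then have "AE x in distr M m_meas (X_inf \<alpha> \<epsilon> \<theta>). x > 0 \<and> x \<noteq> c1" unfolding conjunct1[OF dX] .
      then have "AE \<omega> in M. X_inf \<alpha> \<epsilon> \<theta> \<omega> > 0 \<and> X_inf \<alpha> \<epsilon> \<theta> \<omega> \<noteq> c1" by (rule AE_distrD[OF Xm])
      then have "AE \<omega> in M. Phi \<alpha> (vec \<omega>) > 0 \<and> Phi \<alpha> (vec \<omega>) \<noteq> c1" by (simp add: X_inf_Phi vec_def)
      then have "AE w in distr M B vec. Phi \<alpha> w > 0 \<and> Phi \<alpha> w \<noteq> c1"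
        by (subst AE_distr_iff[OF vec_meas]) (auto simp: B_def)
      then show ?thesis unfolding law .
    qed
    have AEall: "AE w in Q. (\<forall>k. w (Inl k) > 0 \<and> w (Inr k) > 0 \<and> w (Inr k) < 1) \<and> Phi \<alpha> (w \<circ> shf) > 0 \<and> Phi \<alpha> (w \<circ> shf) \<noteq> c1"
      using eventually_conj[OF AEpos AEshift[OF AEPhi]] by simp
    have Fm: "(\<lambda>w. ln (Phi \<alpha> w)) \<in> borel_measurable Q" by (rule measQ) (unfold B_def, measurable)
    have Gm: "(\<lambda>w. ln (Phi \<alpha> (w \<circ> shf))) \<in> borel_measurable Q" by (rule measQ) (unfold B_def, measurable)
    have eq: "distr Q borel (\<lambda>w. ln (Phi \<alpha> (w \<circ> shf))) = distr Q borel (\<lambda>w. ln (Phi \<alpha> w))"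
    proof -
      have "distr (distr Q Q (\<lambda>w. w \<circ> shf)) borel (\<lambda>w. ln (Phi \<alpha> w)) = distr Q borel ((\<lambda>w. ln (Phi \<alpha> w)) \<circ> (\<lambda>w. w \<circ> shf))"
        by (rule distr_distr[OF Fm shf_meas])
      then show ?thesis unfolding shift by (simp add: comp_def)
    qed
    have pw: "Aval w \<ge> 0 \<and> Bval w \<ge> 0 \<and> Aval w - Bval w = ln (Phi \<alpha> w) - ln (Phi \<alpha> (w \<circ> shf))"
      if H: "(\<forall>k. w (Inl k) > 0 \<and> w (Inr k) > 0 \<and> w (Inr k) < 1) \<and> Phi \<alpha> (w \<circ> shf) > 0 \<and> Phi \<alpha> (w \<circ> shf) \<noteq> c1" for w
    proof -
      have sm: "summable (trm \<alpha> (w \<circ> shf))" using H Phi_not_summable[of \<alpha> "w \<circ> shf"] by (auto simp: c1_def)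
      have "w (Inl 1) / Phi \<alpha> (w \<circ> shf) powr \<alpha> > 0" using H by auto
      then have "ln (w (Inl 1) / Phi \<alpha> (w \<circ> shf) powr \<alpha> + 1) \<ge> 0" by simp
      then have "Aval w \<ge> 0" unfolding Aval_def using a by simp
      moreover have "Bval w \<ge> 0" unfolding Bval_def using H[THEN conjunct1, rule_format, of 1] by simp
      moreover have "Aval w - Bval w = ln (Phi \<alpha> w) - ln (Phi \<alpha> (w \<circ> shf))"
        unfolding Aval_def Bval_def using pointwise_identity[OF a _ _ sm] H by auto
      ultimately show ?thesis by simp
    qed
    show ?thesis
      by (rule ennreal_ab[OF Q.prob_space_axioms Gm Fm eq Aval_meas Bval_meas])
         (use AEall in \<open>rule eventually_mono\<close>, rule pw)
  qed
  have "E_t1 \<alpha> f = (\<integral>\<^sup>+ z \<in> {0<..<1}. ennreal (- ln z * h z * z) \<partial>lborel)"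
    unfolding S1 S2[symmetric] S3[symmetric] S5 S4 ..
  then show ?thesis by simp
qed

end
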